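(* Let $\mathscr{A}$ be a closed set of games with misère quotient $(\mathcal{Q},\mathcal{P})$ and quotient map $\Phi$, and let $G$ be a game all of whose options lie in $\mathscr{A}$. Suppose there is $H\in\mathscr{A}$ with $\{\Phi(G'):G'\text{ an option of }G\}=\{\Phi(H'):H'\text{ an option of }H\}$. Let $\mathscr{A}^+=\mathrm{cl}(\mathscr{A}\cup\{G\})$ with quotient map $\Phi^+$. Then $\mathcal{Q}(\mathscr{A}^+)\cong\mathcal{Q}(\mathscr{A})$ via an isomorphism of bipartite monoids $\iota:\mathcal{Q}(\mathscr{A})\to\mathcal{Q}(\mathscr{A}^+)$ satisfying $\iota(\Phi(X))=\Phi^+(X)$ for all $X\in\mathscr{A}$, and $\Phi^+(G)=\Phi^+(H)$.
   Context: Games are finite, loopfree impartial games identified with the finite set of their options; disjunctive sum $G+H=\{G'+H\}\cup\{G+H'\}$. Misère outcome: $o^-(G)=\mathscr{P}$ iff $G\neq0$ and every option has outcome $\mathscr{N}$; otherwise $\mathscr{N}$. A set of games is closed if it contains all options of its members and is closed under $+$. $\mathrm{cl}(\mathscr{S})$ is the closure under addition of the set of all subpositions of members of $\mathscr{S}$. For closed $\mathscr{A}$: $G\equiv_\mathscr{A}H$ iff $o^-(G+X)=o^-(H+X)$ for all $X\in\mathscr{A}$; the misère quotient $\mathcal{Q}(\mathscr{A})=(\mathcal{Q},\mathcal{P})$ is the commutative monoid of $\equiv_\mathscr{A}$-classes ($[G][H]=[G+H]$) together with the set $\mathcal{P}$ of classes of misère $\mathscr{P}$-positions; $\Phi(G)=[G]$.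 An isomorphism of bipartite monoids $(\mathcal{Q},\mathcal{P})\to(\mathcal{S},\mathcal{R})$ is a monoid isomorphism $f$ with $x\in\mathcal{P}\iff f(x)\in\mathcal{R}$. *)

theory Defs
  imports Main "HOL-Library.FSet"
begin

text \<open>Finite loopfree impartial games, identified with the finite set of their options.\<close>
datatype game = Game (opts: "game fset")

definition optrel :: "(game \<times> game) set" where
  "optrel = {(x, g). x |\<in>| opts g}"

lemma wf_optrel: "wf optrel"
  unfolding optrel_def
proof (rule wfUNIVI)
  fix P :: "game \<Rightarrow> bool" and g
  assume H: "\<forall>x. (\<forall>y. (y, x) \<in> {(x, g). x |\<in>| opts g} \<longrightarrow> P y) \<longrightarrow> P x"
  show "P g"
    by (induction g) (use H in auto)
qed

definition gzero :: game where "gzero = Game {||}"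

function gplus :: "game \<Rightarrow> game \<Rightarrow> game" where
  "gplus g h = Game ((\<lambda>g'. gplus g' h) |`| opts g |\<union>| (\<lambda>h'. gplus g h') |`| opts h)"
  by auto
termination
  by (relation "optrel <*lex*> optrel")
     (auto simp: wf_optrel[unfolded optrel_def] optrel_def)

text \<open>Misere outcome: misereP g holds iff o^-(g) = P (otherwise o^-(g) = N).\<close>
function misereP :: "game \<Rightarrow> bool" where
  "misereP g = (g \<noteq> gzero \<and> (\<forall>x\<in>fset (opts g). \<not> misereP x))"
  by auto
termination
  by (relation optrel) (auto simp: wf_optrel[unfolded optrel_def] optrel_def)

definition subpos :: "game \<Rightarrow> game \<Rightarrow> bool" where
  "subpos x g \<longleftrightarrow> (x, g) \<in> optrel\<^sup>*"

definition closed_set :: "game set \<Rightarrow> bool" where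
  "closed_set A \<longleftrightarrow> (\<forall>g\<in>A. \<forall>x\<in>fset (opts g). x \<in> A) \<and> (\<forall>g\<in>A. \<forall>h\<in>A. gplus g h \<in> A)"

inductive_set cl :: "game set \<Rightarrow> game set" for S :: "game set" where
  sub: "g \<in> S \<Longrightarrow> subpos x g \<Longrightarrow> x \<in> cl S"
| add: "g \<in> cl S \<Longrightarrow> h \<in> cl S \<Longrightarrow> gplus g h \<in> cl S"

definition indist :: "game set \<Rightarrow> game \<Rightarrow> game \<Rightarrow> bool" where
  "indist A g h \<longleftrightarrow> (\<forall>x\<in>A. misereP (gplus g x) = misereP (gplus h x))"

definition qmap :: "game set \<Rightarrow> game \<Rightarrow> game set" where
  "qmap A g = {h \<in> A. indist A g h}"

definition qcarrier :: "game set \<Rightarrow> game set set" where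
  "qcarrier A = qmap A ` A"

definition qmult :: "game set \<Rightarrow> game set \<Rightarrow> game set \<Rightarrow> game set" where
  "qmult A x y = qmap A (gplus (SOME g. g \<in> x) (SOME h. h \<in> y))"

definition qPset :: "game set \<Rightarrow> game set set" where
  "qPset A = qmap A ` {g \<in> A. misereP g}"

definition bip_iso :: "game set \<Rightarrow> game set \<Rightarrow> (game set \<Rightarrow> game set) \<Rightarrow> bool" where
  "bip_iso A B f \<longleftrightarrow>
     bij_betw f (qcarrier A) (qcarrier B) \<and>
     (\<forall>x\<in>qcarrier A. \<forall>y\<in>qcarrier A. f (qmult A x y) = qmult B (f x) (f y)) \<and>
     f (qmap A gzero) = qmap B gzero \<and>
     (\<forall>x\<in>qcarrier A. x \<in> qPset A \<longleftrightarrow> f x \<in> qPset B)"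

end

theory Submission
  imports Defs
begin

declare gplus.simps[simp del] misereP.simps[simp del]

lemma opts_gplus: "opts (gplus g h) = (\<lambda>g'. gplus g' h) |`| opts g |\<union>| (\<lambda>h'. gplus g h') |`| opts h"
  by (subst gplus.simps) simp

lemma fset_opts_gplus: "fset (opts (gplus g h)) = (\<lambda>g'. gplus g' h) ` fset (opts g) \<union> (\<lambda>h'. gplus g h') ` fset (opts h)"
  by (simp add: opts_gplus)

lemma misereP_iff: "misereP g = (g \<noteq> gzero \<and> (\<forall>x\<in>fset (opts g). \<not> misereP x))"
  by (subst misereP.simps) (rule refl)

lemma game_eqI: "fset (opts a) = fset (opts b) \<Longrightarrow> a = b"
  by (metis fset_inject game.collapse)

lemma gzero_iff: "g = gzero \<longleftrightarrow> fset (opts g) = {}"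
  unfolding gzero_def by (metis bot_fset.rep_eq fset_inject game.collapse game.sel)

lemma opts_gzero[simp]: "opts gzero = {||}" by (simp add: gzero_def)

lemma gplus_zero[simp]: "gplus g gzero = g"
proof (induction g)
  case (Game xa)
  show ?case by (rule game_eqI) (simp add: fset_opts_gplus Game cong: image_cong)
qed

lemma gplus_comm: "gplus g h = gplus h g"
proof (induction g h rule: gplus.induct)
  case (1 g h)
  show ?case by (rule game_eqI) (auto simp: fset_opts_gplus 1)
qed

lemma gplus_assoc: "gplus (gplus a b) c = gplus a (gplus b c)"
proof (induction a arbitrary: b c)
  case (Game xa)
  note IHa = Game
  show ?case
  proof (induction b arbitrary: c)
    case (Game xb)
    note IHb = Game
    show ?case
    proof (induction c)
      case (Game xc)
      show ?case by (rule game_eqI) (simp add: fset_opts_gplus image_Un image_image IHa IHb Game Un_ac cong: image_cong)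
    qed
  qed
qed

interpretation gp: comm_monoid gplus gzero
  by unfold_locales (auto simp: gplus_assoc intro: gplus_comm)

lemmas gplus_ac = gp.assoc gp.commute gp.left_commute

lemma gplus_eq_zero: "gplus a b = gzero \<longleftrightarrow> a = gzero \<and> b = gzero"
  by (auto simp: gzero_iff fset_opts_gplus)

fun gmul :: "nat \<Rightarrow> game \<Rightarrow> game" where
  "gmul 0 g = gzero"
| "gmul (Suc n) g = gplus g (gmul n g)"

lemma gmul_add: "gmul (n + m) g = gplus (gmul n g) (gmul m g)"
  by (induction n) (simp_all add: gp.assoc)

lemma fset_opts_gmul: "fset (opts (gmul (Suc n) g)) = (\<lambda>g'. gplus (gmul n g) g') ` fset (opts g)"
proof (induction n)
  case 0
  then show ?case by (simp add: gp.commute)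
next
  case (Suc n)
  have "fset (opts (gmul (Suc (Suc n)) g)) = (\<lambda>g'. gplus g' (gmul (Suc n) g)) ` fset (opts g) \<union> (\<lambda>m. gplus g m) ` fset (opts (gmul (Suc n) g))"
    by (simp only: gmul.simps(2)[of "Suc n"] fset_opts_gplus)
  also have "\<dots> = (\<lambda>g'. gplus (gmul (Suc n) g) g') ` fset (opts g)"
    unfolding Suc by (auto simp: image_image gplus_ac)
  finally show ?case .
qed

lemma gmul_zero_iff: "gmul (Suc n) g = gzero \<longleftrightarrow> g = gzero"
  unfolding gzero_iff fset_opts_gmul by simp

lemma indist_refl: "indist C g g" by (simp add: indist_def)
lemma indist_sym: "indist C g h \<Longrightarrow> indist C h g" by (simp add: indist_def)
lemma indist_trans: "indist C g h \<Longrightarrow> indist C h k \<Longrightarrow> indist C g k" by (simp add: indist_def)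

lemma mem_qmap: "h \<in> qmap C g \<longleftrightarrow> h \<in> C \<and> indist C g h" by (simp add: qmap_def)

lemma qmap_eq: "indist C g h \<Longrightarrow> qmap C g = qmap C h"
  unfolding qmap_def using indist_sym indist_trans by blast

lemma qmap_eqD: "qmap C g = qmap C h \<Longrightarrow> g \<in> C \<Longrightarrow> indist C g h"
  unfolding qmap_def using indist_sym indist_refl by blast

lemma indist_misere: "indist C g h \<Longrightarrow> gzero \<in> C \<Longrightarrow> misereP g = misereP h"
  unfolding indist_def by (metis gplus_zero)

lemma closed_opt: "closed_set A \<Longrightarrow> g \<in> A \<Longrightarrow> x \<in> fset (opts g) \<Longrightarrow> x \<in> A"
  unfolding closed_set_def by blast

lemma closed_plus: "closed_set A \<Longrightarrow> g \<in> A \<Longrightarrow> h \<in> A \<Longrightarrow> gplus g h \<in> A"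
  unfolding closed_set_def by blast

lemma closed_zero: "closed_set A \<Longrightarrow> g \<in> A \<Longrightarrow> gzero \<in> A"
proof (induction g)
  case (Game xs)
  show ?case
  proof (cases "xs = {||}")
    case True
    then show ?thesis using Game.prems by (simp add: gzero_def)
  next
    case False
    then obtain x where "x |\<in>| xs" by blast
    then show ?thesis using Game closed_opt[OF Game.prems(1,2), of x] by simp
  qed
qed

lemma closed_gmul: "closed_set A \<Longrightarrow> g \<in> A \<Longrightarrow> gmul n g \<in> A"
  by (induction n) (auto intro: closed_zero closed_plus)

lemma K:
  assumes A: "closed_set A" and GA: "\<forall>x\<in>fset (opts G). x \<in> A" and HA: "H \<in> A"
    and GH: "qmap A ` fset (opts G) = qmap A ` fset (opts H)"
  shows "X \<in> A \<Longrightarrow> misereP (gplus (gmul n G) X) = misereP (gplus (gmul n H) X)"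
proof (induction n arbitrary: X)
  case 0
  then show ?case by simp
next
  case (Suc n)
  have HA': "\<forall>x\<in>fset (opts H). x \<in> A" using closed_opt[OF A HA] by blast
  have GtoH: "\<exists>H'\<in>fset (opts H). indist A G' H'" if "G' \<in> fset (opts G)" for G'
  proof -
    have "qmap A G' \<in> qmap A ` fset (opts H)" using that GH by blast
    then obtain H' where "H' \<in> fset (opts H)" "qmap A G' = qmap A H'" by blast
    then show ?thesis using qmap_eqD[of A G' H'] GA that by blast
  qed
  have HtoG: "\<exists>G'\<in>fset (opts G). indist A G' H'" if "H' \<in> fset (opts H)" for H'
  proof -
    have "qmap A H' \<in> qmap A ` fset (opts G)" using that GH by blast
    then obtain G' where "G' \<in> fset (opts G)" "qmap A H' = qmap A G'" by blast
    then show ?thesis using qmap_eqD[of A H' G'] HA' that indist_sym by blast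
  qed
  have GHz: "G = gzero \<longleftrightarrow> H = gzero"
    using GH by (auto simp: gzero_iff)
  have step: "misereP (gplus (gplus (gmul n G) G') X) = misereP (gplus (gplus (gmul n H) H') X)"
    if "indist A G' H'" "G' \<in> A" "X \<in> A" for G' H' X
  proof -
    have "misereP (gplus (gplus (gmul n G) G') X) = misereP (gplus (gmul n G) (gplus G' X))"
      by (simp add: gp.assoc)
    also have "\<dots> = misereP (gplus (gmul n H) (gplus G' X))"
      using Suc.IH closed_plus[OF A that(2,3)] by blast
    also have "\<dots> = misereP (gplus G' (gplus (gmul n H) X))"
      by (simp add: gplus_ac)
    also have "\<dots> = misereP (gplus H' (gplus (gmul n H) X))"
      using that(1) closed_plus[OF A closed_gmul[OF A HA] that(3)] unfolding indist_def by blast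
    also have "\<dots> = misereP (gplus (gplus (gmul n H) H') X)"
      by (simp add: gplus_ac)
    finally show ?thesis .
  qed
  show ?case using Suc.prems
  proof (induction X)
    case (Game xs)
    define X where "X = Game xs"
    have XA: "X \<in> A" using Game.prems X_def by simp
    have optsX: "x \<in> fset (opts X) \<Longrightarrow> x \<in> A" for x using closed_opt[OF A XA] by blast
    have IHX: "x \<in> fset (opts X) \<Longrightarrow> misereP (gplus (gmul (Suc n) G) x) = misereP (gplus (gmul (Suc n) H) x)" for x
      using Game.IH optsX X_def by simp
    have z: "gplus (gmul (Suc n) G) X = gzero \<longleftrightarrow> gplus (gmul (Suc n) H) X = gzero"
      by (simp only: gplus_eq_zero gmul_zero_iff GHz)
    have oG: "fset (opts (gplus (gmul (Suc n) G) X)) = (\<lambda>g'. gplus (gplus (gmul n G) g') X) ` fset (opts G) \<union> (\<lambda>x. gplus (gmul (Suc n) G) x) ` fset (opts X)"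
      by (simp only: fset_opts_gplus[of "gmul (Suc n) _"] fset_opts_gmul image_image)
    have oH: "fset (opts (gplus (gmul (Suc n) H) X)) = (\<lambda>g'. gplus (gplus (gmul n H) g') X) ` fset (opts H) \<union> (\<lambda>x. gplus (gmul (Suc n) H) x) ` fset (opts X)"
      by (simp only: fset_opts_gplus[of "gmul (Suc n) _"] fset_opts_gmul image_image)
    have e1: "(\<exists>G'\<in>fset (opts G). misereP (gplus (gplus (gmul n G) G') X)) \<longleftrightarrow> (\<exists>H'\<in>fset (opts H). misereP (gplus (gplus (gmul n H) H') X))"
      using GtoH HtoG step GA HA' XA by metis
    have e2: "(\<exists>x\<in>fset (opts X). misereP (gplus (gmul (Suc n) G) x)) \<longleftrightarrow> (\<exists>x\<in>fset (opts X). misereP (gplus (gmul (Suc n) H) x))"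
      using IHX by blast
    have "misereP (gplus (gmul (Suc n) G) X) = misereP (gplus (gmul (Suc n) H) X)"
      apply (subst misereP_iff) apply (subst (2) misereP_iff)
      using z e1 e2 oG oH by auto
    then show ?case using X_def by simp
  qed
qed

lemma subpos_closed:
  assumes A: "closed_set A" and "g \<in> A" and "subpos x g" shows "x \<in> A"
proof -
  have "(x, g) \<in> optrel\<^sup>*" using assms(3) by (simp add: subpos_def)
  then show ?thesis
  proof (induction rule: converse_rtrancl_induct)
    case base then show ?case using assms(2) .
  next
    case (step y z) then show ?case using closed_opt[OF A] by (auto simp: optrel_def)
  qed
qed

lemma indist_cong:
  assumes C: "\<forall>a\<in>C. \<forall>b\<in>C. gplus a b \<in> C"
    and "indist C a a'" "indist C b b'" "a' \<in> C" "b \<in> C"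
  shows "indist C (gplus a b) (gplus a' b')"
  unfolding indist_def
proof
  fix z assume z: "z \<in> C"
  have "misereP (gplus (gplus a b) z) = misereP (gplus a (gplus b z))" by (simp add: gplus_ac)
  also have "\<dots> = misereP (gplus a' (gplus b z))" using assms(2) C z assms(5) unfolding indist_def by blast
  also have "\<dots> = misereP (gplus b (gplus a' z))" by (simp add: gplus_ac)
  also have "\<dots> = misereP (gplus b' (gplus a' z))" using assms(3) C z assms(4) unfolding indist_def by blast
  also have "\<dots> = misereP (gplus (gplus a' b') z)" by (simp add: gplus_ac)
  finally show "misereP (gplus (gplus a b) z) = misereP (gplus (gplus a' b') z)" .
qed

lemma qP_iff: "gzero \<in> C \<Longrightarrow> X \<in> C \<Longrightarrow> qmap C X \<in> qPset C \<longleftrightarrow> misereP X"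
  unfolding qPset_def using qmap_eqD indist_misere indist_sym by blast

lemma someq: "X \<in> C \<Longrightarrow> (SOME x. x \<in> qmap C X) \<in> C \<and> indist C X (SOME x. x \<in> qmap C X)"
proof -
  assume "X \<in> C"
  then have "X \<in> qmap C X" by (simp add: mem_qmap indist_refl)
  then have "(SOME x. x \<in> qmap C X) \<in> qmap C X" by (rule someI)
  then show ?thesis by (simp add: mem_qmap)
qed

theorem mainTheorem13:
  fixes A :: "game set" and G H :: game
  assumes "closed_set A"
    and "\<forall>x\<in>fset (opts G). x \<in> A"
    and "H \<in> A"
    and "qmap A ` fset (opts G) = qmap A ` fset (opts H)"
  shows "\<exists>\<iota>. bip_iso A (cl (A \<union> {G})) \<iota> \<and>
             (\<forall>X\<in>A. \<iota> (qmap A X) = qmap (cl (A \<union> {G})) X) \<and>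
             qmap (cl (A \<union> {G})) G = qmap (cl (A \<union> {G})) H"
proof -
  note A = assms(1) and GA = assms(2) and HA = assms(3)
  note KK = K[OF assms]
  define B where "B = cl (A \<union> {G})"
  have AB: "A \<subseteq> B" unfolding B_def using cl.sub[of _ "A \<union> {G}"] by (auto simp: subpos_def)
  have GB: "G \<in> B" unfolding B_def using cl.sub[of G "A \<union> {G}" G] by (auto simp: subpos_def)
  have Bplus: "\<forall>a\<in>B. \<forall>b\<in>B. gplus a b \<in> B" unfolding B_def using cl.add by blast
  have zA: "gzero \<in> A" using closed_zero[OF A HA] .
  have zB: "gzero \<in> B" using zA AB by blast
  have gmulB: "gmul n G \<in> B" for n
    by (induction n) (use zB GB Bplus in auto)
  have form: "\<exists>n X. X \<in> A \<and> z = gplus (gmul n G) X" if "z \<in> B" for z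
    using that unfolding B_def
  proof (induction rule: cl.induct)
    case (sub g x)
    show ?case
    proof (cases "g \<in> A")
      case True
      then have "x \<in> A" using subpos_closed[OF A] sub by blast
      then show ?thesis by (intro exI[of _ 0]) simp
    next
      case False
      then have g: "g = G" using sub by blast
      have "(x, G) \<in> optrel\<^sup>*" using sub g by (simp add: subpos_def)
      then show ?thesis
      proof (cases rule: rtranclE)
        case base
        then show ?thesis by (intro exI[of _ 1] exI[of _ gzero]) (simp add: zA)
      next
        case (step y)
        then have "y \<in> A" using GA by (auto simp: optrel_def)
        then have "x \<in> A" using subpos_closed[OF A, of y x] step by (simp add: subpos_def)
        then show ?thesis by (intro exI[of _ 0]) simp
      qed
    qed
  next
    case (add g h)
    then obtain n X m Y where "X \<in> A" "g = gplus (gmul n G) X" "Y \<in> A" "h = gplus (gmul m G) Y" by blast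
    then show ?case
      by (intro exI[of _ "n + m"] exI[of _ "gplus X Y"]) (simp add: closed_plus[OF A] gmul_add gplus_ac)
  qed
  have ind1: "indist B X Y" if "X \<in> A" "indist A X Y" "Y \<in> A" for X Y
    unfolding indist_def
  proof
    fix z assume "z \<in> B"
    then obtain m W where W: "W \<in> A" "z = gplus (gmul m G) W" using form by blast
    have "misereP (gplus X z) = misereP (gplus (gmul m G) (gplus X W))" using W by (simp add: gplus_ac)
    also have "\<dots> = misereP (gplus (gmul m H) (gplus X W))" using KK closed_plus[OF A that(1) W(1)] by blast
    also have "\<dots> = misereP (gplus X (gplus (gmul m H) W))" by (simp add: gplus_ac)
    also have "\<dots> = misereP (gplus Y (gplus (gmul m H) W))"
      using that(2) closed_plus[OF A closed_gmul[OF A HA] W(1)] unfolding indist_def by blast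
    also have "\<dots> = misereP (gplus (gmul m H) (gplus Y W))" by (simp add: gplus_ac)
    also have "\<dots> = misereP (gplus (gmul m G) (gplus Y W))"
      using KK closed_plus[OF A that(3) W(1)] by metis
    also have "\<dots> = misereP (gplus Y z)" using W by (simp add: gplus_ac)
    finally show "misereP (gplus X z) = misereP (gplus Y z)" .
  qed
  have ind2: "indist B (gplus (gmul n G) X) (gplus (gmul n H) X)" if "X \<in> A" for n X
    unfolding indist_def
  proof
    fix z assume "z \<in> B"
    then obtain m W where W: "W \<in> A" "z = gplus (gmul m G) W" using form by blast
    have "misereP (gplus (gplus (gmul n G) X) z) = misereP (gplus (gmul (n + m) G) (gplus X W))"
      using W by (simp add: gmul_add gplus_ac)
    also have "\<dots> = misereP (gplus (gmul (n + m) H) (gplus X W))" using KK closed_plus[OF A that W(1)] by blast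
    also have "\<dots> = misereP (gplus (gmul m H) (gplus (gmul n H) (gplus X W)))" by (simp add: gmul_add gplus_ac)
    also have "\<dots> = misereP (gplus (gmul m G) (gplus (gmul n H) (gplus X W)))"
      using KK closed_plus[OF A closed_gmul[OF A HA] closed_plus[OF A that W(1)]] by metis
    also have "\<dots> = misereP (gplus (gplus (gmul n H) X) z)" using W by (simp add: gplus_ac)
    finally show "misereP (gplus (gplus (gmul n G) X) z) = misereP (gplus (gplus (gmul n H) X) z)" .
  qed
  define \<iota> where "\<iota> = (\<lambda>c. qmap B (SOME x. x \<in> c))"
  have iota: "\<iota> (qmap A X) = qmap B X" if "X \<in> A" for X
    using someq[OF that] ind1 that unfolding \<iota>_def by (metis qmap_eq)
  have GH: "qmap B G = qmap B H"
    using ind2[OF zA, of 1] by (simp add: qmap_eq)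
  have inj: "inj_on \<iota> (qcarrier A)"
  proof (rule inj_onI)
    fix c d assume "c \<in> qcarrier A" "d \<in> qcarrier A" "\<iota> c = \<iota> d"
    then obtain X Y where XY: "X \<in> A" "Y \<in> A" "c = qmap A X" "d = qmap A Y" "qmap B X = qmap B Y"
      unfolding qcarrier_def using iota by auto
    then have "indist B X Y" using qmap_eqD AB by blast
    then have "indist A X Y" using AB unfolding indist_def by blast
    then show "c = d" using XY qmap_eq by blast
  qed
  have img: "\<iota> ` qcarrier A = qcarrier B"
  proof
    show "\<iota> ` qcarrier A \<subseteq> qcarrier B" unfolding qcarrier_def using iota AB by auto
  next
    show "qcarrier B \<subseteq> \<iota> ` qcarrier A"
    proof
      fix c assume "c \<in> qcarrier B"
      then obtain z where "z \<in> B" "c = qmap B z" unfolding qcarrier_def by blast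
      then obtain n X where X: "X \<in> A" "c = qmap B (gplus (gmul n G) X)" using form by blast
      then have "c = qmap B (gplus (gmul n H) X)" using ind2 qmap_eq by metis
      moreover have "gplus (gmul n H) X \<in> A" using closed_plus[OF A closed_gmul[OF A HA] X(1)] .
      ultimately show "c \<in> \<iota> ` qcarrier A" unfolding qcarrier_def using iota by auto
    qed
  qed
  have mult: "\<iota> (qmult A x y) = qmult B (\<iota> x) (\<iota> y)" if xy: "x \<in> qcarrier A" "y \<in> qcarrier A" for x y
  proof -
    obtain X Y where XY: "X \<in> A" "Y \<in> A" "x = qmap A X" "y = qmap A Y"
      using xy unfolding qcarrier_def by blast
    define X1 where "X1 = (SOME g. g \<in> qmap A X)"
    define Y1 where "Y1 = (SOME g. g \<in> qmap A Y)"
    define X2 where "X2 = (SOME g. g \<in> qmap B X)"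
    define Y2 where "Y2 = (SOME g. g \<in> qmap B Y)"
    have 1: "X1 \<in> A" "indist A X X1" using someq[OF XY(1)] X1_def by auto
    have 2: "Y1 \<in> A" "indist A Y Y1" using someq[OF XY(2)] Y1_def by auto
    have 3: "X2 \<in> B" "indist B X X2" using someq[of X B] XY(1) AB X2_def by auto
    have 4: "Y2 \<in> B" "indist B Y Y2" using someq[of Y B] XY(2) AB Y2_def by auto
    have a: "indist B X1 X2" using ind1[OF 1(1) indist_sym[OF 1(2)] XY(1)] 3(2) indist_trans by blast
    have b: "indist B Y1 Y2" using ind1[OF 2(1) indist_sym[OF 2(2)] XY(2)] 4(2) indist_trans by blast
    have "qmult A x y = qmap A (gplus X1 Y1)" unfolding qmult_def XY X1_def Y1_def ..
    then have "\<iota> (qmult A x y) = qmap B (gplus X1 Y1)" using iota closed_plus[OF A 1(1) 2(1)] by simp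
    also have "\<dots> = qmap B (gplus X2 Y2)"
      using indist_cong[OF Bplus a b 3(1)] 2(1) AB qmap_eq by blast
    also have "\<dots> = qmult B (\<iota> x) (\<iota> y)" unfolding qmult_def XY iota[OF XY(1)] iota[OF XY(2)] X2_def Y2_def ..
    finally show ?thesis .
  qed
  have P: "x \<in> qPset A \<longleftrightarrow> \<iota> x \<in> qPset B" if xA: "x \<in> qcarrier A" for x
  proof -
    obtain X where "X \<in> A" "x = qmap A X" using xA unfolding qcarrier_def by blast
    then show ?thesis using qP_iff[OF zA] qP_iff[OF zB] iota AB by auto
  qed
  have "bip_iso A B \<iota>"
    unfolding bip_iso_def bij_betw_def using inj img mult P iota[OF zA] by blast
  then show ?thesis using iota GH unfolding B_def by blast
qed

end
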